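(* Let $M=(m_0,m_1,m_2,\ldots)$ be a (possibly finite) sequence of integers with $m_0=1$ and $m_j\ge 2$ for all $j\ge 1$. Then for all positive integers $n$ and $r$ (with $r$ at most the largest index of $M$ if $M$ is finite) we have $$p_M(m_1m_2\cdots m_r\,n-1)\equiv 0 \pmod{\prod_{t=2}^{r}\mathcal{M}(m_t,t-1)}.$$
   Context: For $r\ge 0$ put $M_r:=m_0m_1\cdots m_r$. An $M$-ary partition of a positive integer $N$ is a representation $N=M_{r_1}+M_{r_2}+\cdots+M_{r_s}$ with nonnegative integers $r_1,\ldots,r_s$, where the order of the summands is disregarded (i.e. a partition of $N$ all of whose parts are of the form $M_r$). $p_M(N)$ denotes the number of $M$-ary partitions of $N$. For positive integers $m,r$ define $\mathcal{M}(m,r):=\dfrac{m}{\gcd\big(m,\operatorname{lcm}(1,2,\ldots,r)\big)}$. An empty product (the case $r=1$) equals $1$. *)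

theory Defs
  imports Main "HOL-Library.Multiset" "HOL-Library.Extended_Nat"
begin

text \<open>The sequence M = (m_0, m_1, ...) is a function m :: nat => nat together with its
  largest index L :: enat (L = infinity for an infinite sequence). Only indices
  j with enat j <= L belong to the sequence.\<close>

definition Mprod :: "(nat \<Rightarrow> nat) \<Rightarrow> nat \<Rightarrow> nat" where
  "Mprod m r = (\<Prod>i\<le>r. m i)"

text \<open>An M-ary partition of N: a finite multiset of indices s (each s an index of the
  sequence) such that the parts M_s sum to N; p_M(N) is the number of these.\<close>
definition pM :: "(nat \<Rightarrow> nat) \<Rightarrow> enat \<Rightarrow> nat \<Rightarrow> nat" where
  "pM m L N = card {S :: nat multiset. (\<forall>s\<in>#S. enat s \<le> L) \<and>
                      sum_mset (image_mset (Mprod m) S) = N}"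

definition calM :: "nat \<Rightarrow> nat \<Rightarrow> nat" where
  "calM m r = m div gcd m (Lcm {1..r})"

end

theory Submission
  imports Defs
begin

definition dif :: "(nat \<Rightarrow> int) \<Rightarrow> nat \<Rightarrow> int" where
  "dif f = (\<lambda>x. f (Suc x) - f x)"

definition VV :: "nat \<Rightarrow> (nat \<Rightarrow> int) \<Rightarrow> bool" where
  "VV d f \<longleftrightarrow> (dif ^^ Suc d) f = (\<lambda>_. 0)"

definition TT :: "nat \<Rightarrow> (nat \<Rightarrow> int) \<Rightarrow> nat \<Rightarrow> int" where
  "TT b f = (\<lambda>x. \<Sum>i<b. f (x + i))"

definition difb :: "nat \<Rightarrow> (nat \<Rightarrow> int) \<Rightarrow> nat \<Rightarrow> int" where
  "difb b f = (\<lambda>x. f (x + b) - f x)"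

lemma dif_zero: "(dif ^^ n) (\<lambda>_. 0) = (\<lambda>_. 0)"
  by (induction n) (auto simp: dif_def)

lemma TT_zero: "(TT b ^^ n) (\<lambda>_. 0) = (\<lambda>_. 0)"
  by (induction n) (auto simp: TT_def)

lemma dif_scale: "(dif ^^ n) (\<lambda>x. c * f x) = (\<lambda>x. c * (dif ^^ n) f x)"
  by (induction n) (auto simp: dif_def algebra_simps)

lemma dif_shift: "(dif ^^ n) (\<lambda>x. f (Suc x)) = (\<lambda>x. (dif ^^ n) f (Suc x))"
  by (induction n) (auto simp: dif_def)

lemma VV_shift: "VV d f \<Longrightarrow> VV d (\<lambda>x. f (Suc x))"
  unfolding VV_def dif_shift by (metis)

lemma VV_scale: assumes "VV d f" "\<And>x. f x = c * g x" "c \<noteq> 0" shows "VV d g"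
proof -
  have "f = (\<lambda>x. c * g x)" using assms(2) by auto
  then have "(\<lambda>x. c * (dif ^^ Suc d) g x) = (\<lambda>_. 0)" using assms(1) unfolding VV_def dif_scale[symmetric] by simp
  then show ?thesis unfolding VV_def using assms(3) by (auto simp: fun_eq_iff)
qed

lemma dif_sum: "dif (\<lambda>x. \<Sum>j<x. f j) = f"
  by (auto simp: dif_def fun_eq_iff)

lemma VV_sum: "VV d f \<Longrightarrow> VV (Suc d) (\<lambda>x. \<Sum>j<x. f j)"
  unfolding VV_def by (simp only: funpow_Suc_right o_apply dif_sum)

lemma dif_TT: "dif (TT b f) = TT b (dif f)"
  by (auto simp: dif_def TT_def fun_eq_iff sum_subtractf)

lemma difb_TT: "difb b f = TT b (dif f)"
proof -
  have "\<And>x. (\<Sum>i<b. f (Suc (x + i)) - f (x + i)) = f (x + b) - f x"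
    by (induction b) auto
  then show ?thesis by (auto simp: difb_def TT_def dif_def fun_eq_iff)
qed

lemma dif_TTn: "dif ((TT b ^^ n) f) = (TT b ^^ n) (dif f)"
  by (induction n) (auto simp: dif_TT)

lemma difb_pow: "(difb b ^^ n) f = (TT b ^^ n) ((dif ^^ n) f)"
proof (induction n)
  case (Suc n)
  have "(difb b ^^ Suc n) f = TT b (dif ((TT b ^^ n) ((dif ^^ n) f)))"
    by (simp add: Suc difb_TT)
  also have "\<dots> = (TT b ^^ Suc n) ((dif ^^ Suc n) f)"
    by (simp add: dif_TTn)
  finally show ?case .
qed simp

lemma dif_comp1: "dif (\<lambda>x. g (b * x)) = (\<lambda>x. difb b g (b * x))"
  by (simp add: dif_def difb_def algebra_simps)

lemma dif_comp: "(dif ^^ n) (\<lambda>x. f (b * x)) = (\<lambda>x. (difb b ^^ n) f (b * x))"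
proof (induction n)
  case (Suc n)
  show ?case by (simp only: funpow.simps o_apply Suc dif_comp1)
qed simp

lemma VV_comp: "VV d f \<Longrightarrow> VV d (\<lambda>x. f (b * x))"
  unfolding VV_def dif_comp difb_pow by (simp add: TT_zero TT_def)

lemma newton: "f x = (\<Sum>i\<le>x. of_nat (x choose i) * (dif ^^ i) f 0)"
proof (induction x arbitrary: f)
  case 0
  then show ?case by simp
next
  case (Suc x)
  define D where "D i = (dif ^^ i) f 0" for i
  have sh: "(dif ^^ i) (\<lambda>y. f (Suc y)) 0 = D i + D (Suc i)" for i
    by (simp add: dif_shift D_def dif_def)
  have "f (Suc x) = (\<Sum>i\<le>x. of_nat (x choose i) * (D i + D (Suc i)))"
    using Suc[of "\<lambda>y. f (Suc y)"] sh by simp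
  also have "\<dots> = (\<Sum>i\<le>x. of_nat (x choose i) * D i) + (\<Sum>i\<le>x. of_nat (x choose i) * D (Suc i))"
    by (simp add: algebra_simps sum.distrib)
  also have "(\<Sum>i\<le>x. of_nat (x choose i) * D i) = D 0 + (\<Sum>i\<le>x. of_nat (x choose Suc i) * D (Suc i))"
  proof -
    have "(\<Sum>i\<le>x. of_nat (x choose i) * D i) = D 0 + (\<Sum>i<x. of_nat (x choose Suc i) * D (Suc i))"
    proof (cases x)
      case (Suc y)
      show ?thesis unfolding Suc sum.atMost_Suc_shift lessThan_Suc_atMost by simp
    qed simp
    also have "(\<Sum>i<x. of_nat (x choose Suc i) * D (Suc i)) = (\<Sum>i\<le>x. of_nat (x choose Suc i) * D (Suc i))"
      by (simp add: lessThan_Suc_atMost[symmetric])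
    finally show ?thesis .
  qed
  also have "D 0 + (\<Sum>i\<le>x. of_nat (x choose Suc i) * D (Suc i)) + (\<Sum>i\<le>x. of_nat (x choose i) * D (Suc i))
     = (\<Sum>i\<le>Suc x. of_nat (Suc x choose i) * D i)"
    by (simp add: sum.atMost_Suc_shift sum.distrib algebra_simps del: sum.atMost_Suc)
  finally show ?case by (simp add: D_def)
qed

lemma newtonV: assumes "VV d f" shows "f x = (\<Sum>i\<le>d. of_nat (x choose i) * (dif ^^ i) f 0)"
proof -
  have z: "(dif ^^ i) f = (\<lambda>_. 0)" if "i > d" for i
  proof -
    have "(dif ^^ i) f = (dif ^^ (i - Suc d)) ((dif ^^ Suc d) f)"
      using that by (metis Suc_leI funpow_add le_add_diff_inverse2 o_apply)
    then show ?thesis using assms by (simp add: VV_def dif_zero)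
  qed
  have "f x = (\<Sum>i\<le>x + d. of_nat (x choose i) * (dif ^^ i) f 0)"
    by (subst newton) (rule sum.mono_neutral_left, auto)
  also have "\<dots> = (\<Sum>i\<le>d. of_nat (x choose i) * (dif ^^ i) f 0)"
    by (rule sum.mono_neutral_right) (auto simp: z)
  finally show ?thesis .
qed

lemma dvd_calM: fixes X :: int assumes "int b dvd int l * X" "b > 0"
  shows "int (b div gcd b l) dvd X"
proof -
  define g where "g = gcd b l"
  have gp: "g > 0" using assms(2) by (simp add: g_def)
  define b' where "b' = b div g"
  define l' where "l' = l div g"
  have b: "b = g * b'" unfolding b'_def g_def by simp
  have l: "l = g * l'" unfolding l'_def g_def by simp
  have cop: "coprime b' l'" unfolding b'_def l'_def g_def using assms(2) by (intro div_gcd_coprime) auto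
  have "int b' dvd int l' * X" using assms(1) gp unfolding b l by (simp add: mult.assoc)
  then have "int b' dvd X" using cop by (metis coprime_dvd_mult_right_iff coprime_int_iff)
  moreover have "b div g = b'" using b gp by simp
  ultimately show ?thesis by (simp add: g_def)
qed

lemma VV_dvd: assumes "VV d f" "f 0 = 0" "b > 0"
  shows "int (calM b d) dvd f (b * k)"
proof -
  define l where "l = (Lcm {1..d} :: nat)"
  have "int b dvd int l * f (b * k)"
  proof -
    have "int l * f (b * k) = (\<Sum>i\<le>d. int l * of_nat (b * k choose i) * (dif ^^ i) f 0)"
      by (subst newtonV[OF assms(1)]) (simp add: sum_distrib_left mult.assoc)
    also have "int b dvd \<dots>"
    proof (rule dvd_sum)
      fix i assume i: "i \<in> {..d}"
      show "int b dvd int l * of_nat (b * k choose i) * (dif ^^ i) f 0"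
      proof (cases "i = 0")
        case True then show ?thesis using assms(2) by simp
      next
        case False
        then have "i dvd l" using i unfolding l_def by (intro dvd_Lcm) auto
        then obtain l' where "l = i * l'" by blast
        then have "l * (b * k choose i) = l' * (b * k * (b * k - 1 choose (i - 1)))"
          using times_binomial_minus1_eq[of i "b*k"] False by (simp add: algebra_simps)
        then have "b dvd l * (b * k choose i)" by simp
        then have "int b dvd int (l * (b * k choose i))" by (simp only: int_dvd_int_iff)
        then show ?thesis by (simp add: dvd_mult2)
      qed
    qed
    finally show ?thesis .
  qed
  then show ?thesis unfolding calM_def l_def using dvd_calM assms(3) by blast
qed

definition shiftM :: "(nat \<Rightarrow> nat) \<Rightarrow> nat \<Rightarrow> nat" where
  "shiftM m = (\<lambda>i. if i = 0 then 1 else m (Suc i))"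

definition good :: "(nat \<Rightarrow> nat) \<Rightarrow> enat \<Rightarrow> bool" where
  "good m L \<longleftrightarrow> m 0 = 1 \<and> (\<forall>j. 1 \<le> j \<longrightarrow> enat j \<le> L \<longrightarrow> 2 \<le> m j)"

lemma Mprod_0: "Mprod m 0 = m 0" by (simp add: Mprod_def)

lemma Mprod_Suc: "Mprod m (Suc s) = Mprod m s * m (Suc s)"
  by (simp add: Mprod_def)

lemma Mprod_shift: assumes "m 0 = 1" shows "Mprod m (Suc s) = m 1 * Mprod (shiftM m) s"
proof (induction s)
  case 0 then show ?case using assms by (simp add: Mprod_def shiftM_def)
next
  case (Suc s)
  have "Mprod m (Suc (Suc s)) = Mprod m (Suc s) * m (Suc (Suc s))" by (rule Mprod_Suc)
  also have "\<dots> = m 1 * (Mprod (shiftM m) s * shiftM m (Suc s))" using Suc by (simp add: shiftM_def)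
  also have "\<dots> = m 1 * Mprod (shiftM m) (Suc s)" by (simp only: Mprod_Suc)
  finally show ?case .
qed

lemma Mprod_ge: assumes "good m L" "enat s \<le> L" shows "s < Mprod m s"
  using assms(2)
proof (induction s)
  case 0 then show ?case using assms(1) by (simp add: good_def Mprod_0)
next
  case (Suc s)
  have "enat s \<le> enat (Suc s)" by simp
  then have "enat s \<le> L" using Suc.prems by (rule order_trans)
  then have "s < Mprod m s" using Suc.IH by blast
  moreover have "2 \<le> m (Suc s)" using assms(1) Suc.prems by (simp add: good_def)
  ultimately have "Suc s * 2 \<le> Mprod m s * m (Suc s)"
    by (intro mult_le_mono) auto
  then show ?case by (simp add: Mprod_Suc)
qed

lemma size_le_sum: "(\<forall>s\<in>#S. 1 \<le> f s) \<Longrightarrow> size S \<le> sum_mset (image_mset f S)"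
  by (induction S) auto

lemma elem_le_sum: "x \<in># S \<Longrightarrow> (f x :: nat) \<le> sum_mset (image_mset f S)"
  by (metis image_mset_add_mset insert_DiffM le_add1 sum_mset.insert)

lemma finite_pM: assumes "good m L"
  shows "finite {S. (\<forall>s\<in>#S. enat s \<le> L) \<and> sum_mset (image_mset (Mprod m) S) = N}"
proof (rule finite_subset)
  show "finite (\<Union>k\<le>N. multisets_of_size {..N} k)" by auto
  show "{S. (\<forall>s\<in>#S. enat s \<le> L) \<and> sum_mset (image_mset (Mprod m) S) = N} \<subseteq> (\<Union>k\<le>N. multisets_of_size {..N} k)"
  proof
    fix S assume S: "S \<in> {S. (\<forall>s\<in>#S. enat s \<le> L) \<and> sum_mset (image_mset (Mprod m) S) = N}"
    have lt: "s < Mprod m s" if "s \<in># S" for s using S that Mprod_ge[OF assms] by auto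
    have "set_mset S \<subseteq> {..N}"
    proof
      fix s assume "s \<in># S"
      then have "s < Mprod m s" "Mprod m s \<le> N" using lt elem_le_sum[of s S "Mprod m"] S by auto
      then show "s \<in> {..N}" by simp
    qed
    moreover have "size S \<le> N"
    proof -
      have "\<forall>s\<in>#S. 1 \<le> Mprod m s"
      proof
        fix s assume "s \<in># S"
        then have "s < Mprod m s" by (rule lt)
        then show "1 \<le> Mprod m s" by simp
      qed
      then have "size S \<le> sum_mset (image_mset (Mprod m) S)" by (rule size_le_sum)
      then show ?thesis using S by simp
    qed
    ultimately show "S \<in> (\<Union>k\<le>N. multisets_of_size {..N} k)" unfolding multisets_of_size_def by auto
  qed
qed

lemma good_shift: assumes "good m (eSuc L)" shows "good (shiftM m) L"
  using assms unfolding good_def shiftM_def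
  by (auto simp: eSuc_enat[symmetric])

lemma sum_split: assumes "m 0 = 1"
  shows "sum_mset (image_mset (Mprod m) S) = count S 0 + m 1 *
    sum_mset (image_mset (Mprod (shiftM m)) (image_mset (\<lambda>s. s - 1) (filter_mset (\<lambda>s. s \<noteq> 0) S)))"
proof (induction S)
  case (add x S)
  then show ?case
  proof (cases x)
    case 0 then show ?thesis using add assms by (simp add: Mprod_0)
  next
    case (Suc y) then show ?thesis using add by (simp add: Mprod_shift[where m=m, OF assms] algebra_simps)
  qed
qed simp

lemma countC: assumes "good m (eSuc L)"
  shows "pM m (eSuc L) N = (\<Sum>j\<le>N div m 1. pM (shiftM m) L j)"
proof -
  define m1 where "m1 = m 1"
  have m0: "m 0 = 1" using assms by (simp add: good_def)
  have "(1::enat) \<le> eSuc L" by (simp add: one_eSuc)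
  then have "enat 1 \<le> eSuc L" by (simp add: one_enat_def)
  then have m1: "m1 \<ge> 2" using assms by (simp add: good_def m1_def)
  define A where "A = {S. (\<forall>s\<in>#S. enat s \<le> eSuc L) \<and> sum_mset (image_mset (Mprod m) S) = N}"
  define B where "B j = {S. (\<forall>s\<in>#S. enat s \<le> L) \<and> sum_mset (image_mset (Mprod (shiftM m)) S) = j}" for j
  define \<phi> where "\<phi> = (\<lambda>(j, S'). replicate_mset (N - m1 * j) (0::nat) + image_mset Suc S')"
  define \<psi> where "\<psi> = (\<lambda>S::nat multiset. ((N - count S 0) div m1, image_mset (\<lambda>s. s - 1) (filter_mset (\<lambda>s. s \<noteq> 0) S)))"
  have filt: "filter_mset (\<lambda>s. s \<noteq> 0) (replicate_mset k 0 + image_mset Suc S') = image_mset Suc S'" for k S'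
    by (induction S') auto
  have cnt: "count (replicate_mset k 0 + image_mset Suc S') 0 = k" for k S'
    by (induction S') auto
  have c_phi: "count (\<phi> (j,S')) 0 = N - m1*j" for j S'
    unfolding \<phi>_def case_prod_conv by (rule cnt)
  have f_phi: "filter_mset (\<lambda>s. s \<noteq> 0) (\<phi> (j,S')) = image_mset Suc S'" for j S'
    unfolding \<phi>_def case_prod_conv by (rule filt)
  have i_phi: "image_mset (\<lambda>s. s - 1) (image_mset Suc S') = S'" for S' :: "nat multiset"
    by (induction S') auto
  have bij: "bij_betw \<phi> (Sigma {..N div m1} B) A"
  proof (rule bij_betw_byWitness[of _ \<psi> \<phi>])
    show "\<forall>a\<in>Sigma {..N div m1} B. \<psi> (\<phi> a) = a"
    proof
      fix a assume "a \<in> Sigma {..N div m1} B"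
      then obtain j S' where a: "a = (j, S')" "j \<le> N div m1" by auto
      then have "m1 * j \<le> N" using m1 by (simp add: less_eq_div_iff_mult_less_eq mult.commute)
      have "\<psi> (\<phi> a) = ((N - (N - m1*j)) div m1, S')"
        unfolding a \<psi>_def by (simp only: c_phi f_phi i_phi)
      then show "\<psi> (\<phi> a) = a" using m1 \<open>m1 * j \<le> N\<close> a by simp
    qed
    show "\<forall>a'\<in>A. \<phi> (\<psi> a') = a'"
    proof
      fix S assume "S \<in> A"
      then have sN: "sum_mset (image_mset (Mprod m) S) = N" by (simp add: A_def)
      define X where "X = sum_mset (image_mset (Mprod (shiftM m)) (image_mset (\<lambda>s. s - 1) (filter_mset (\<lambda>s. s \<noteq> 0) S)))"
      have N: "N = count S 0 + m1 * X" using sum_split[where m=m and S=S, OF m0] sN by (simp add: X_def m1_def)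
      have "(N - count S 0) div m1 = X" using N m1 by simp
      then have c1: "N - m1 * ((N - count S 0) div m1) = count S 0" using N by simp
      have c2: "image_mset Suc (image_mset (\<lambda>s. s - 1) (filter_mset (\<lambda>s. s \<noteq> 0) S)) = filter_mset (\<lambda>s. s \<noteq> 0) S"
        by (induction S) auto
      have "\<phi> (\<psi> S) = replicate_mset (count S 0) 0 + filter_mset (\<lambda>s. s \<noteq> 0) S"
        unfolding \<phi>_def \<psi>_def by (simp only: case_prod_conv c1 c2)
      also have "\<dots> = filter_mset (\<lambda>s. s = 0) S + filter_mset (\<lambda>s. \<not> s = 0) S"
        by (simp only: filter_eq_replicate_mset)
      also have "\<dots> = S" by (rule multiset_partition[symmetric])
      finally show "\<phi> (\<psi> S) = S" .
    qed
    show "\<phi> ` Sigma {..N div m1} B \<subseteq> A"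
    proof
      fix S assume "S \<in> \<phi> ` Sigma {..N div m1} B"
      then obtain j S' where j: "j \<le> N div m1" "S' \<in> B j" and S: "S = \<phi> (j, S')" by auto
      have "m1 * j \<le> N" using j(1) m1 by (simp add: less_eq_div_iff_mult_less_eq mult.commute)
      have "sum_mset (image_mset (Mprod m) S) = (N - m1 * j) + m1 * j"
        using sum_split[where m=m and S=S, OF m0] j(2) unfolding S B_def
        by (simp only: c_phi f_phi i_phi m1_def mem_Collect_eq)
      also have "\<dots> = N" using \<open>m1 * j \<le> N\<close> by simp
      finally have "sum_mset (image_mset (Mprod m) S) = N" .
      moreover have "\<forall>s\<in>#S. enat s \<le> eSuc L"
      proof
        fix s assume "s \<in># S"
        then have "s = 0 \<or> s \<in># image_mset Suc S'" unfolding S \<phi>_def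
          by (auto split: if_splits)
        then show "enat s \<le> eSuc L"
        proof
          assume "s = 0" then show ?thesis using zero_le[of "eSuc L"] by (simp add: zero_enat_def)
        next
          assume "s \<in># image_mset Suc S'"
          then obtain t where "t \<in># S'" "s = Suc t" by auto
          then have "enat t \<le> L" using j(2) by (simp add: B_def)
          then show ?thesis using \<open>s = Suc t\<close> by (simp add: eSuc_enat[symmetric])
        qed
      qed
      ultimately show "S \<in> A" by (simp add: A_def)
    qed
    show "\<psi> ` A \<subseteq> Sigma {..N div m1} B"
    proof
      fix p assume "p \<in> \<psi> ` A"
      then obtain S where S: "S \<in> A" "p = \<psi> S" by auto
      then have sN: "sum_mset (image_mset (Mprod m) S) = N" and el: "\<forall>s\<in>#S. enat s \<le> eSuc L" by (auto simp: A_def)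
      define X where "X = sum_mset (image_mset (Mprod (shiftM m)) (image_mset (\<lambda>s. s - 1) (filter_mset (\<lambda>s. s \<noteq> 0) S)))"
      have N: "N = count S 0 + m1 * X" using sum_split[where m=m and S=S, OF m0] sN by (simp add: X_def m1_def)
      have q: "(N - count S 0) div m1 = X" using N m1 by simp
      have Xle: "X \<le> N div m1" using N m1 by (simp add: less_eq_div_iff_mult_less_eq mult.commute)
      have el2: "\<forall>s\<in>#image_mset (\<lambda>s. s - 1) (filter_mset (\<lambda>s. s \<noteq> 0) S). enat s \<le> L"
      proof
        fix s assume "s \<in># image_mset (\<lambda>s. s - 1) (filter_mset (\<lambda>s. s \<noteq> 0) S)"
        then obtain t where "t \<in># S" "t \<noteq> 0" "s = t - 1" by auto
        then have "enat t \<le> eSuc L" using el by blast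
        moreover have "t = Suc s" using \<open>t \<noteq> 0\<close> \<open>s = t - 1\<close> by simp
        ultimately have "eSuc (enat s) \<le> eSuc L" by (simp add: eSuc_enat)
        then show "enat s \<le> L" by (simp only: eSuc_ile_mono)
      qed
      have pe: "p = (X, image_mset (\<lambda>s. s - 1) (filter_mset (\<lambda>s. s \<noteq> 0) S))"
        unfolding S(2) \<psi>_def by (simp only: q)
      have "image_mset (\<lambda>s. s - 1) (filter_mset (\<lambda>s. s \<noteq> 0) S) \<in> B X"
        unfolding B_def X_def mem_Collect_eq using el2 by blast
      then show "p \<in> Sigma {..N div m1} B" using Xle pe by blast
    qed
  qed
  have "pM m (eSuc L) N = card A" by (simp add: pM_def A_def)
  also have "\<dots> = card (Sigma {..N div m1} B)" using bij by (rule bij_betw_same_card[symmetric])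
  also have "\<dots> = (\<Sum>j\<le>N div m1. card (B j))"
  proof (rule card_SigmaI)
    show "finite {..N div m1}" by simp
    show "\<forall>a\<in>{..N div m1}. finite (B a)" unfolding B_def using finite_pM[OF good_shift[OF assms]] by blast
  qed
  also have "\<dots> = (\<Sum>j\<le>N div m 1. pM (shiftM m) L j)" unfolding B_def pM_def m1_def by (rule refl)
  finally show ?thesis .
qed

primrec QQ :: "(nat \<Rightarrow> nat) \<Rightarrow> nat \<Rightarrow> nat \<Rightarrow> nat" where
  "QQ a 0 k = (if k = 1 then 1 else 0)"
| "QQ a (Suc t) k = (\<Sum>j< a (Suc t) * k. QQ a t (Suc j))"

lemma rev_sum: assumes "x \<le> y" shows "(\<Sum>i\<in>{x..<y}. g (y - i)) = (\<Sum>j<y - x. g (Suc j))"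
  by (rule sum.reindex_bij_witness[of _ "\<lambda>j. y - Suc j" "\<lambda>i. y - Suc i"]) (use assms in \<open>auto simp: Suc_diff_Suc\<close>)

lemma conv:
  fixes F :: "nat \<Rightarrow> nat \<Rightarrow> nat" and a :: "nat \<Rightarrow> nat"
  assumes rec: "\<And>s N. s < R \<Longrightarrow> F s N = (\<Sum>j\<le>N div a (Suc s). F (Suc s) j)"
    and pos: "\<And>j. 1 \<le> j \<Longrightarrow> j \<le> R \<Longrightarrow> 0 < a j"
  shows "r \<le> R \<Longrightarrow> 0 < n \<Longrightarrow> F 0 ((\<Prod>i=1..r. a i) * n - 1) = (\<Sum>i<n. F r i * QQ a r (n - i))"
proof (induction r arbitrary: n)
  case 0
  have "(\<Sum>i<n. F 0 i * QQ a 0 (n - i)) = (\<Sum>i<n. if i = n - 1 then F 0 i else 0)"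
    by (rule sum.cong) auto
  also have "\<dots> = F 0 (n - 1)" using 0 by (simp add: sum.delta)
  finally show ?case by simp
next
  case (Suc r)
  define b where "b = a (Suc r)"
  have b: "0 < b" using pos[of "Suc r"] Suc.prems by (simp add: b_def)
  have bn: "0 < b * n" using b Suc.prems by simp
  have pr: "(\<Prod>i=1..Suc r. a i) * n = (\<Prod>i=1..r. a i) * (b * n)"
    by (simp add: prod.cl_ivl_Suc b_def)
  have IH: "F 0 ((\<Prod>i=1..r. a i) * (b * n) - 1) = (\<Sum>i<b * n. F r i * QQ a r (b * n - i))"
    using Suc.IH[OF _ bn] Suc.prems by simp
  have Fr: "F r i = (\<Sum>l<n. if b * l \<le> i then F (Suc r) l else 0)" if i: "i < b * n" for i
  proof -
    have "F r i = (\<Sum>l\<le>i div b. F (Suc r) l)" using rec[of r i] Suc.prems by (simp add: b_def)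
    also have "{..i div b} = {l\<in>{..<n}. b * l \<le> i}"
    proof (rule set_eqI)
      fix l
      have "l \<le> i div b \<longleftrightarrow> b * l \<le> i" using b by (simp add: less_eq_div_iff_mult_less_eq mult.commute)
      moreover have "b * l \<le> i \<Longrightarrow> l < n" using i b by (metis le_less_trans mult_less_cancel1)
      ultimately show "l \<in> {..i div b} \<longleftrightarrow> l \<in> {l\<in>{..<n}. b * l \<le> i}" by auto
    qed
    also have "(\<Sum>l\<in>{l\<in>{..<n}. b * l \<le> i}. F (Suc r) l) = (\<Sum>l<n. if b * l \<le> i then F (Suc r) l else 0)"
      by (rule sum.inter_filter) simp
    finally show ?thesis .
  qed
  have inner: "(\<Sum>i<b * n. if b * l \<le> i then QQ a r (b * n - i) else 0) = QQ a (Suc r) (n - l)" if l: "l < n" for l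
  proof -
    have "(\<Sum>i<b * n. if b * l \<le> i then QQ a r (b * n - i) else 0) = (\<Sum>i\<in>{i\<in>{..<b*n}. b * l \<le> i}. QQ a r (b * n - i))"
      by (rule sum.inter_filter[symmetric]) simp
    also have "{i\<in>{..<b*n}. b * l \<le> i} = {b * l..<b * n}" by auto
    also have "(\<Sum>i\<in>{b * l..<b * n}. QQ a r (b * n - i)) = (\<Sum>j<b * n - b * l. QQ a r (Suc j))"
      using l by (intro rev_sum) simp
    also have "b * n - b * l = a (Suc r) * (n - l)" by (simp add: b_def diff_mult_distrib2)
    finally show ?thesis by simp
  qed
  have "F 0 ((\<Prod>i=1..Suc r. a i) * n - 1) = (\<Sum>i<b * n. F r i * QQ a r (b * n - i))"
    by (subst pr) (rule IH)
  also have "\<dots> = (\<Sum>i<b * n. \<Sum>l<n. (if b * l \<le> i then F (Suc r) l else 0) * QQ a r (b * n - i))"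
    by (rule sum.cong) (simp_all add: Fr sum_distrib_right)
  also have "\<dots> = (\<Sum>l<n. \<Sum>i<b * n. F (Suc r) l * (if b * l \<le> i then QQ a r (b * n - i) else 0))"
    by (subst sum.swap) (rule sum.cong, simp, rule sum.cong, simp_all)
  also have "\<dots> = (\<Sum>l<n. F (Suc r) l * (\<Sum>i<b * n. if b * l \<le> i then QQ a r (b * n - i) else 0))"
    by (simp add: sum_distrib_left)
  also have "\<dots> = (\<Sum>l<n. F (Suc r) l * QQ a (Suc r) (n - l))"
    by (rule sum.cong) (simp_all add: inner)
  finally show ?case .
qed

definition Dp :: "(nat \<Rightarrow> nat) \<Rightarrow> nat \<Rightarrow> nat" where
  "Dp a t = (\<Prod>s=2..t. calM (a s) (s - 1))"

lemma calM_pos: "0 < x \<Longrightarrow> 0 < calM x y"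
  unfolding calM_def by (simp add: div_greater_zero_iff gcd_le1_nat)

lemma Vlem:
  assumes pos: "\<And>j. 1 \<le> j \<Longrightarrow> j \<le> R \<Longrightarrow> 0 < a j"
  shows "1 \<le> t \<Longrightarrow> t \<le> R \<Longrightarrow> (\<forall>j. Dp a t dvd QQ a t (Suc j)) \<and> VV (t - 1) (\<lambda>j. int (QQ a t (Suc j) div Dp a t))"
proof (induction t)
  case 0 then show ?case by simp
next
  case (Suc t)
  show ?case
  proof (cases "t = 0")
    case True
    have a1: "0 < a 1" using pos[of 1] Suc.prems True by simp
    have q1: "QQ a 1 (Suc j) = 1" for j
    proof -
      have "QQ a 1 (Suc j) = (\<Sum>i<a 1 * Suc j. if i = 0 then 1 else 0)" by simp
      also have "\<dots> = 1"
      proof -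
        have "0 \<in> {..<a 1 * Suc j}" using a1 by simp
        then show ?thesis by (subst sum.delta) simp_all
      qed
      finally show ?thesis .
    qed
    have d1: "Dp a (Suc 0) = 1" by (simp add: Dp_def)
    have "(\<lambda>j. int (QQ a (Suc 0) (Suc j) div Dp a (Suc 0))) = (\<lambda>_. 1)"
    proof -
      have q1': "QQ a (Suc 0) (Suc j) = 1" for j using q1[of j] by simp
      show ?thesis by (simp only: q1' d1) simp
    qed
    moreover have "VV 0 (\<lambda>_. 1)" by (simp add: VV_def dif_def)
    ultimately show ?thesis using True q1 d1 by simp
  next
    case False
    then have t1: "1 \<le> t" by simp
    define D where "D = Dp a t"
    define g where "g j = int (QQ a t (Suc j) div D)" for j
    have IH: "\<forall>j. D dvd QQ a t (Suc j)" "VV (t - 1) g"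
      using Suc.IH t1 Suc.prems unfolding D_def g_def by auto
    have Dpos: "0 < D" unfolding D_def Dp_def using pos Suc.prems
      by (intro prod_pos calM_pos) auto
    have hQ: "int (QQ a t (Suc j)) = int D * g j" for j
      using IH(1) unfolding g_def by (metis dvd_mult_div_cancel of_nat_mult)
    define H where "H x = (\<Sum>j<x. g j)" for x
    have VH: "VV t H" using VV_sum[OF IH(2)] t1 unfolding H_def by (simp add: fun_eq_iff)
    have H0: "H 0 = 0" by (simp add: H_def)
    define b where "b = a (Suc t)"
    have b: "0 < b" using pos[of "Suc t"] Suc.prems by (simp add: b_def)
    define c where "c = calM b t"
    have cpos: "0 < c" using calM_pos[OF b] by (simp add: c_def)
    have Qs: "int (QQ a (Suc t) k) = int D * H (b * k)" for k
      by (simp add: H_def b_def hQ sum_distrib_left)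
    have cd: "int c dvd H (b * k)" for k unfolding c_def by (rule VV_dvd[OF VH H0 b])
    have Dps: "Dp a (Suc t) = D * c"
      using t1 by (simp add: Dp_def D_def c_def b_def prod.cl_ivl_Suc)
    define K where "K x = H (b * Suc x)" for x
    have VK: "VV t K"
    proof -
      have "VV t (\<lambda>x. H (b * x))" by (rule VV_comp[OF VH])
      then show ?thesis using VV_shift unfolding K_def by fastforce
    qed
    have part1: "Dp a (Suc t) dvd QQ a (Suc t) (Suc j)" for j
    proof -
      have "int (D * c) dvd int (QQ a (Suc t) (Suc j))"
        using Qs[of "Suc j"] cd[of "Suc j"] by (simp add: mult_dvd_mono)
      then show ?thesis by (simp only: Dps int_dvd_int_iff)
    qed
    have eq: "int (QQ a (Suc t) (Suc j) div Dp a (Suc t)) = K j div int c" for j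
    proof -
      obtain e where e: "K j = int c * e" using cd[of "Suc j"] unfolding K_def by blast
      have "int (QQ a (Suc t) (Suc j)) = int (D * c) * e" using Qs[of "Suc j"] e unfolding K_def by simp
      then have "int (QQ a (Suc t) (Suc j) div Dp a (Suc t)) = (int (D * c) * e) div int (D * c)"
        by (simp only: Dps zdiv_int)
      also have "\<dots> = e" using Dpos cpos by simp
      finally show ?thesis using e cpos by simp
    qed
    have "VV t (\<lambda>j. K j div int c)"
    proof (rule VV_scale[OF VK, of "int c"])
      show "int c \<noteq> 0" using cpos by simp
      fix x show "K x = int c * (K x div int c)" using cd[of "Suc x"] unfolding K_def by simp
    qed
    then show ?thesis using part1 eq by simp
  qed
qed

lemma funpow_shiftM: "m 0 = 1 \<Longrightarrow> (shiftM ^^ s) m j = (if j = 0 then 1 else m (j + s))"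
  by (induction s arbitrary: j) (auto simp: shiftM_def)

lemma enat_sub_step: assumes "enat r \<le> L" "s < r"
  shows "L - enat s = eSuc (L - enat (Suc s))"
proof (cases L)
  case (enat l)
  then have "s < l" using assms by simp
  then have "l - s = Suc (l - Suc s)" by simp
  then show ?thesis using enat by (simp add: eSuc_enat)
next
  case infinity then show ?thesis by simp
qed

lemma good_chain:
  assumes "m 0 = 1" and "\<And>j. 1 \<le> j \<Longrightarrow> enat j \<le> L \<Longrightarrow> m j \<ge> 2"
  shows "good ((shiftM ^^ s) m) (L - enat s)"
  unfolding good_def
proof (intro conjI allI impI)
  show "(shiftM ^^ s) m 0 = 1" by (simp add: funpow_shiftM[where m=m, OF assms(1)])
  fix j assume j: "1 \<le> j" "enat j \<le> L - enat s"
  have "enat (j + s) \<le> L"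
  proof (cases L)
    case (enat l) then show ?thesis using j by simp
  next
    case infinity then show ?thesis by simp
  qed
  then have "2 \<le> m (j + s)" using assms(2) j(1) by simp
  then show "2 \<le> (shiftM ^^ s) m j" using j by (simp add: funpow_shiftM[where m=m, OF assms(1)])
qed

theorem theorem1p3:
  fixes m :: "nat \<Rightarrow> nat" and L :: enat and n r :: nat
  assumes "m 0 = 1"
    and "\<And>j. 1 \<le> j \<Longrightarrow> enat j \<le> L \<Longrightarrow> m j \<ge> 2"
    and "n > 0" and "r > 0" and "enat r \<le> L"
  shows "(\<Prod>t=2..r. calM (m t) (t - 1)) dvd pM m L ((\<Prod>i=1..r. m i) * n - 1)"
proof -
  define F where "F s N = pM ((shiftM ^^ s) m) (L - enat s) N" for s N
  have rec: "F s N = (\<Sum>j\<le>N div m (Suc s). F (Suc s) j)" if s: "s < r" for s N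
  proof -
    have e: "L - enat s = eSuc (L - enat (Suc s))" using enat_sub_step[OF assms(5) s] .
    have g: "good ((shiftM ^^ s) m) (eSuc (L - enat (Suc s)))"
      using good_chain[where m=m and L=L and s=s, OF assms(1,2)] e by simp
    have "F s N = (\<Sum>j\<le>N div (shiftM ^^ s) m 1. pM (shiftM ((shiftM ^^ s) m)) (L - enat (Suc s)) j)"
      unfolding F_def e by (rule countC[OF g])
    also have "\<dots> = (\<Sum>j\<le>N div m (Suc s). F (Suc s) j)"
      by (simp add: F_def funpow_shiftM[where m=m, OF assms(1)])
    finally show ?thesis .
  qed
  have pos: "0 < m j" if "1 \<le> j" "j \<le> r" for j
  proof -
    have "enat j \<le> L" using that assms(5) by (meson enat_ord_simps(1) order_trans)
    then show ?thesis using assms(2)[OF that(1)] by simp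
  qed
  have conv_eq: "F 0 ((\<Prod>i=1..r. m i) * n - 1) = (\<Sum>i<n. F r i * QQ m r (n - i))"
    by (rule conv[of r F m r n]) (use rec pos assms(3) in auto)
  have F0: "F 0 N = pM m L N" for N by (simp add: F_def zero_enat_def[symmetric])
  have V: "\<forall>j. Dp m r dvd QQ m r (Suc j)"
    using Vlem[of r m r] pos assms(4) by auto
  have "Dp m r dvd (\<Sum>i<n. F r i * QQ m r (n - i))"
  proof (rule dvd_sum)
    fix i assume "i \<in> {..<n}"
    then have "n - i = Suc (n - i - 1)" by simp
    then show "Dp m r dvd F r i * QQ m r (n - i)" using V by (metis dvd_mult)
  qed
  then show ?thesis using conv_eq F0 by (simp add: Dp_def)
qed

end
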